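(* For all nonnegative integers $i,j$, \[ l_i(t)\,l_j(t) = \sum_{k\geq 0} n_{i,j,k}\, l_k(t), \] where the polynomials $l_k(t)$ and the numbers $n_{i,j,k}$ are as defined in the context.
   Context: The polynomials $l_k(t)$, $k\ge 0$, are defined by the generating function $\sum_{k=0}^\infty l_k(t)x^k = e^{tx/(1+x)}$. Equivalently, $l_k(t)=(-1)^k L_k^{(-1)}(t)$, where $L_k^{(\alpha)}(t)=\sum_{i=0}^k(-1)^i\binom{k+\alpha}{k-i}\frac{t^i}{i!}$ are the generalized Laguerre polynomials. For example, $l_0=1$, $l_1=t$, $l_2=\tfrac12t^2-t$. A word is a finite sequence of letters; a word is Carlitz if no two adjacent letters are equal. A factorization is an ordered list $(\phi_1)(\phi_2)\cdots(\phi_k)$ of nonempty words, called its parts (factors). $n_{i,j,k}$ denotes the number of factorizations over the alphabet $\{a,b\}$ with exactly $k$ parts, using exactly $i$ copies of $a$ and $j$ copies of $b$ in total, such that each part is a Carlitz word. (For example, $n_{2,5,3}=6$.) *)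

theory Defs
  imports "HOL-Computational_Algebra.Polynomial"
begin

text \<open>The polynomials l_k(t) = (-1)^k L_k^(-1)(t), with
  L_k^(alpha)(t) = sum_{i=0..k} (-1)^i binom(k+alpha, k-i) t^i / i!.\<close>
definition lpoly :: "nat \<Rightarrow> real poly" where
  "lpoly k = (\<Sum>i\<le>k. smult ((-1)^k * (-1)^i * ((of_nat k - 1) gchoose (k - i)) / fact i)
                               (monom 1 i))"

datatype letter = A | B

definition carlitz :: "letter list \<Rightarrow> bool" where
  "carlitz w \<longleftrightarrow> (\<forall>m. Suc m < length w \<longrightarrow> w ! m \<noteq> w ! Suc m)"

definition carlitz_factorizations :: "nat \<Rightarrow> nat \<Rightarrow> nat \<Rightarrow> letter list list set" where
  "carlitz_factorizations i j k =
     {fs. length fs = k \<and> (\<forall>w\<in>set fs. w \<noteq> [] \<and> carlitz w)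
          \<and> count_list (concat fs) A = i \<and> count_list (concat fs) B = j}"

definition ncount :: "nat \<Rightarrow> nat \<Rightarrow> nat \<Rightarrow> nat" where
  "ncount i j k = card (carlitz_factorizations i j k)"

end

theory Submission
  imports Defs
begin


lemma coeff_lpoly: "coeff (lpoly k) m = (if m \<le> k then (-1)^k * (-1)^m * ((of_nat k - 1) gchoose (k - m)) / fact m else 0)"
proof -
  have "\<And>i. (-1)^k * (-1)^i * ((of_nat k - 1) gchoose (k - i)) / fact i * coeff (monom (1::real) i) m
     = (if i = m then (-1)^k * (-1)^m * ((of_nat k - 1) gchoose (k - m)) / fact m else 0)"
    by (simp add: coeff_monom)
  then show ?thesis unfolding lpoly_def by (simp add: coeff_sum)
qed

lemma pderiv_sum': "pderiv (sum f S) = (\<Sum>x\<in>S. pderiv (f x))"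
  by (induction S rule: infinite_finite_induct) (simp_all add: pderiv_add)

lemma lpoly_0[simp]: "lpoly 0 = 1"
  unfolding lpoly_def by (simp add: monom_0 one_pCons)

lemma lpoly_deriv: "pderiv (lpoly (Suc k)) + pderiv (lpoly k) = lpoly k"
proof (rule poly_eqI)
  fix m
  show "coeff (pderiv (lpoly (Suc k)) + pderiv (lpoly k)) m = coeff (lpoly k) m"
  proof (cases "m < k")
    case True
    then obtain n where n: "k - m = Suc n" by (metis Suc_diff_Suc)
    have g: "(of_nat k :: real) gchoose (Suc n) = ((of_nat k - 1) gchoose n) + ((of_nat k - 1) gchoose (Suc n))"
      using gbinomial_Suc_Suc[of "of_nat k - 1 :: real" n] by simp
    have "k - Suc m = n" using n by simp
    moreover have "Suc k - Suc m = Suc n" using n by simp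
    ultimately show ?thesis using True n g
      apply (simp add: coeff_pderiv coeff_lpoly)
      apply (simp add: fact_reduce[of "Suc m"] divide_simps)
      by (simp add: algebra_simps)
  next
    case False
    have "(fact k :: real) + fact k * real k > 0"
      by (simp add: add_pos_nonneg)
    then show ?thesis using False
      by (cases "m = k") (auto simp: coeff_pderiv coeff_lpoly field_simps)
  qed
qed



lemma carlitz_single[simp]: "carlitz [x]" by (simp add: carlitz_def)

lemma carlitz_Cons2[simp]: "carlitz (x#y#w) \<longleftrightarrow> x \<noteq> y \<and> carlitz (y#w)"
proof
  assume c: "carlitz (x#y#w)"
  have "x \<noteq> y" using c unfolding carlitz_def by (drule_tac x=0 in spec) simp
  moreover have "carlitz (y#w)" unfolding carlitz_def
  proof (intro allI impI)
    fix m assume "Suc m < length (y#w)"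
    then have "Suc (Suc m) < length (x#y#w)" by simp
    then have "(x#y#w) ! Suc m \<noteq> (x#y#w) ! Suc (Suc m)" using c unfolding carlitz_def by blast
    then show "(y#w) ! m \<noteq> (y#w) ! Suc m" by simp
  qed
  ultimately show "x \<noteq> y \<and> carlitz (y#w)" by blast
next
  assume h: "x \<noteq> y \<and> carlitz (y#w)"
  show "carlitz (x#y#w)" unfolding carlitz_def
  proof (intro allI impI)
    fix m assume m: "Suc m < length (x#y#w)"
    show "(x#y#w) ! m \<noteq> (x#y#w) ! Suc m"
    proof (cases m)
      case 0 then show ?thesis using h by simp
    next
      case (Suc m')
      then have "Suc m' < length (y#w)" using m by simp
      then have "(y#w) ! m' \<noteq> (y#w) ! Suc m'" using h unfolding carlitz_def by blast
      then show ?thesis using Suc by simp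
    qed
  qed
qed

abbreviation CF where "CF \<equiv> carlitz_factorizations"

lemma CF_mem: "fs \<in> CF i j k \<longleftrightarrow> length fs = k \<and> (\<forall>w\<in>set fs. w \<noteq> [] \<and> carlitz w)
          \<and> count_list (concat fs) A = i \<and> count_list (concat fs) B = j"
  by (simp add: carlitz_factorizations_def)

lemma length_count: "length (w::letter list) = count_list w A + count_list w B"
proof (induction w)
  case (Cons a w) then show ?case by (cases a) auto
qed simp

lemma length_concat_ge: "\<forall>w\<in>set fs. w \<noteq> [] \<Longrightarrow> length fs \<le> length (concat fs)"
proof (induction fs)
  case (Cons w fs) then show ?case by (cases w) auto
qed simp

lemma length_mem_concat: "w \<in> set fs \<Longrightarrow> length w \<le> length (concat fs)"
  by (induction fs) auto

lemma finite_CF: "finite (CF i j k)"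
proof -
  let ?W = "{w. set w \<subseteq> {A,B} \<and> length w \<le> i + j}"
  have fW: "finite ?W" by (rule finite_lists_length_le) simp
  have "CF i j k \<subseteq> {fs. set fs \<subseteq> ?W \<and> length fs \<le> k}"
  proof
    fix fs assume fs: "fs \<in> CF i j k"
    have "set fs \<subseteq> ?W"
    proof
      fix w assume w: "w \<in> set fs"
      have "\<And>x::letter. x \<in> {A,B}" by (case_tac x) auto
      then have "set w \<subseteq> {A,B}" by blast
      moreover have "length w \<le> i + j"
        using length_mem_concat[OF w] fs length_count[of "concat fs"] by (simp add: CF_mem)
      ultimately show "w \<in> ?W" by simp
    qed
    then show "fs \<in> {fs. set fs \<subseteq> ?W \<and> length fs \<le> k}" using fs by (simp add: CF_mem)
  qed
  moreover have "finite {fs. set fs \<subseteq> ?W \<and> length fs \<le> k}" by (rule finite_lists_length_le[OF fW])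
  ultimately show ?thesis by (rule finite_subset)
qed

lemma ncount_support: "ncount i j k \<noteq> 0 \<Longrightarrow> k \<le> i + j"
proof -
  assume "ncount i j k \<noteq> 0"
  then obtain fs where fs: "fs \<in> CF i j k" unfolding ncount_def by (metis card.empty ex_in_conv)
  then have "length fs \<le> length (concat fs)" by (intro length_concat_ge) (auto simp: CF_mem)
  then show ?thesis using fs length_count[of "concat fs"] by (simp add: CF_mem)
qed

lemma ncount_0: "ncount i j 0 = (if i = 0 \<and> j = 0 then 1 else 0)"
proof -
  have "CF i j 0 = (if i = 0 \<and> j = 0 then {[]} else {})"
    by (auto simp: CF_mem)
  then show ?thesis unfolding ncount_def by simp
qed

lemma CF_snoc: "fs @ [w] \<in> CF i j (Suc k) \<longleftrightarrow> w \<noteq> [] \<and> carlitz w \<and> count_list w A \<le> i \<and> count_list w B \<le> j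
   \<and> fs \<in> CF (i - count_list w A) (j - count_list w B) k"
  by (auto simp: CF_mem)

lemma CF_last: "fs \<in> CF i j (Suc k) \<Longrightarrow> fs \<noteq> []"
  unfolding CF_mem by auto

lemma CF_last': "fs \<in> CF i j (Suc k) \<Longrightarrow> butlast fs @ [last fs] \<in> CF i j (Suc k)"
  unfolding CF_mem by (cases fs rule: rev_cases) auto

lemma len3: "3 \<le> length w \<Longrightarrow> \<exists>x y v. w = x # y # v \<and> v \<noteq> []"
  by (cases w rule: remdups_adj.cases) auto

lemma card_last:
  assumes w: "w \<noteq> []" "carlitz w"
  shows "card {fs \<in> CF i j (Suc k). last fs = w} =
     (if count_list w A \<le> i \<and> count_list w B \<le> j then ncount (i - count_list w A) (j - count_list w B) k else 0)"
proof (cases "count_list w A \<le> i \<and> count_list w B \<le> j")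
  case True
  have "bij_betw (\<lambda>fs. fs @ [w]) (CF (i - count_list w A) (j - count_list w B) k) {fs \<in> CF i j (Suc k). last fs = w}"
  proof (rule bij_betw_byWitness[where f' = butlast])
    show "(\<lambda>fs. fs @ [w]) ` CF (i - count_list w A) (j - count_list w B) k \<subseteq> {fs \<in> CF i j (Suc k). last fs = w}"
      using True w by (auto simp: CF_snoc simp del: carlitz_factorizations_def)
    show "butlast ` {fs \<in> CF i j (Suc k). last fs = w} \<subseteq> CF (i - count_list w A) (j - count_list w B) k"
    proof
      fix gs assume "gs \<in> butlast ` {fs \<in> CF i j (Suc k). last fs = w}"
      then obtain fs where fs: "fs \<in> CF i j (Suc k)" "last fs = w" "gs = butlast fs" by auto
      then have "butlast fs @ [w] \<in> CF i j (Suc k)" using CF_last'[OF fs(1)] fs(2) by simp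
      then show "gs \<in> CF (i - count_list w A) (j - count_list w B) k" using fs CF_snoc by blast
    qed
  qed (auto dest!: CF_last)
  then show ?thesis using True unfolding ncount_def by (simp add: bij_betw_same_card)
next
  case False
  have "{fs \<in> CF i j (Suc k). last fs = w} = {}"
  proof (rule ccontr)
    assume "{fs \<in> CF i j (Suc k). last fs = w} \<noteq> {}"
    then obtain fs where fs: "fs \<in> CF i j (Suc k)" "last fs = w" by auto
    then have "butlast fs @ [w] \<in> CF i j (Suc k)" using CF_last'[OF fs(1)] fs(2) by simp
    then show False using False CF_snoc by blast
  qed
  then show ?thesis using False by (metis card.empty)
qed

fun oth where "oth A = B" | "oth B = A"

definition ext :: "letter list \<Rightarrow> letter list" where "ext w = hd w # oth (hd w) # w"

lemma card_long:
  "card {fs \<in> CF i j (Suc k). 3 \<le> length (last fs)} =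
     (if 0 < i \<and> 0 < j then ncount (i - 1) (j - 1) (Suc k) else 0)"
proof (cases "0 < i \<and> 0 < j")
  case True
  let ?f = "\<lambda>gs. butlast gs @ [ext (last gs)]"
  let ?g = "\<lambda>fs. butlast fs @ [drop 2 (last fs)]"
  have "bij_betw ?f (CF (i - 1) (j - 1) (Suc k)) {fs \<in> CF i j (Suc k). 3 \<le> length (last fs)}"
  proof (rule bij_betw_byWitness[where f' = ?g])
    show "\<forall>a\<in>CF (i - 1) (j - 1) (Suc k). ?g (?f a) = a"
      by (auto simp: ext_def dest!: CF_last)
    show "\<forall>a\<in>{fs \<in> CF i j (Suc k). 3 \<le> length (last fs)}. ?f (?g a) = a"
    proof
      fix fs assume fs: "fs \<in> {fs \<in> CF i j (Suc k). 3 \<le> length (last fs)}"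
      then have "fs \<noteq> []" by (auto dest: CF_last)
      then have fs1: "fs = butlast fs @ [last fs]" by simp
      then have "last fs \<in> set fs" using \<open>fs \<noteq> []\<close> by simp
      then have c: "carlitz (last fs)" using fs by (auto simp: CF_mem)
      have "3 \<le> length (last fs)" using fs by simp
      then obtain x y v where v: "last fs = x # y # v" "v \<noteq> []" using len3 by blast
      obtain a u where au: "v = a # u" using v(2) by (cases v) auto
      have "ext v = x # y # v" using c v unfolding au by (cases a; cases x; cases y; auto simp: ext_def)
      then show "?f (?g fs) = fs" using v fs1 by simp
    qed
    show "?f ` CF (i - 1) (j - 1) (Suc k) \<subseteq> {fs \<in> CF i j (Suc k). 3 \<le> length (last fs)}"
    proof
      fix fs0 assume "fs0 \<in> ?f ` CF (i - 1) (j - 1) (Suc k)"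
      then obtain gs where gs: "gs \<in> CF (i - 1) (j - 1) (Suc k)" "fs0 = ?f gs" by auto
      have gs1: "butlast gs @ [last gs] \<in> CF (i - 1) (j - 1) (Suc k)" using CF_last'[OF gs(1)] by simp
      then obtain x v where xv: "last gs = x # v" and cv: "carlitz (x # v)" by (auto simp: CF_snoc neq_Nil_conv)
      have e: "ext (last gs) = x # oth x # x # v" by (simp add: ext_def xv)
      have ce: "carlitz (ext (last gs))" using cv by (cases x; cases v) (auto simp: e)
      have cnt: "count_list (ext (last gs)) A = count_list (last gs) A + 1"
                "count_list (ext (last gs)) B = count_list (last gs) B + 1"
        apply (cases x; simp add: ext_def xv) apply (cases x; simp add: ext_def xv) done
      have bl: "butlast gs \<in> CF (i - 1 - count_list (last gs) A) (j - 1 - count_list (last gs) B) k"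
        and le: "count_list (last gs) A \<le> i - 1" "count_list (last gs) B \<le> j - 1"
        using gs1 unfolding CF_snoc by auto
      have ne: "ext (last gs) \<noteq> []" by (simp add: e)
      have eqA: "i - 1 - count_list (last gs) A = i - (count_list (last gs) A + 1)" by simp
      have eqB: "j - 1 - count_list (last gs) B = j - (count_list (last gs) B + 1)" by simp
      have "count_list (last gs) A + 1 \<le> i" "count_list (last gs) B + 1 \<le> j" using le True by linarith+
      then have "butlast gs @ [ext (last gs)] \<in> CF i j (Suc k)"
        unfolding CF_snoc cnt using bl ne ce unfolding eqA eqB by blast
      moreover have "3 \<le> length (ext (last gs))" by (simp add: e)
      ultimately show "fs0 \<in> {fs \<in> CF i j (Suc k). 3 \<le> length (last fs)}"
        unfolding gs(2) by simp
    qed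
    show "?g ` {fs \<in> CF i j (Suc k). 3 \<le> length (last fs)} \<subseteq> CF (i - 1) (j - 1) (Suc k)"
    proof
      fix gs0 assume "gs0 \<in> ?g ` {fs \<in> CF i j (Suc k). 3 \<le> length (last fs)}"
      then obtain fs where fs: "fs \<in> CF i j (Suc k)" "3 \<le> length (last fs)" "gs0 = ?g fs" by auto
      have fs1: "butlast fs @ [last fs] \<in> CF i j (Suc k)" using CF_last'[OF fs(1)] by simp
      obtain x y v where v: "last fs = x # y # v" "v \<noteq> []" using len3[OF fs(2)] by blast
      have "carlitz v" "x \<noteq> y" using fs1 v(2) by (auto simp: CF_snoc v(1) neq_Nil_conv)
      moreover have "{x, y} = {A, B}" using \<open>x \<noteq> y\<close> by (cases x; cases y) auto
      moreover have "count_list (x # y # v) A = count_list v A + 1 \<and> count_list (x # y # v) B = count_list v B + 1"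
        using \<open>x \<noteq> y\<close> by (cases x; cases y) simp_all
      moreover have "butlast fs \<in> CF (i - count_list (last fs) A) (j - count_list (last fs) B) k"
        "count_list (last fs) A \<le> i" "count_list (last fs) B \<le> j"
        using fs1 unfolding CF_snoc by auto
      ultimately show "gs0 \<in> CF (i - 1) (j - 1) (Suc k)"
        unfolding fs(3) v(1) CF_snoc using v(2) by simp linarith
    qed
  qed
  then show ?thesis using True unfolding ncount_def by (simp add: bij_betw_same_card)
next
  case False
  have "{fs \<in> CF i j (Suc k). 3 \<le> length (last fs)} = {}"
  proof (rule ccontr)
    assume "{fs \<in> CF i j (Suc k). 3 \<le> length (last fs)} \<noteq> {}"
    then obtain fs where fs: "fs \<in> CF i j (Suc k)" "3 \<le> length (last fs)" by auto
    have fs1: "butlast fs @ [last fs] \<in> CF i j (Suc k)" using CF_last'[OF fs(1)] by simp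
    obtain x y v where v: "last fs = x # y # v" using len3[OF fs(2)] by blast
    have "carlitz (last fs)" "count_list (last fs) A \<le> i" "count_list (last fs) B \<le> j"
      using fs1 unfolding CF_snoc by auto
    then have "x \<noteq> y" unfolding v by simp
    then have "1 \<le> count_list (last fs) A \<and> 1 \<le> count_list (last fs) B"
      unfolding v by (cases x; cases y) simp_all
    then show False using False \<open>count_list (last fs) A \<le> i\<close> \<open>count_list (last fs) B \<le> j\<close> by simp
  qed
  then show ?thesis using False by (metis card.empty)
qed



lemma short_cases: "w \<noteq> [] \<Longrightarrow> carlitz w \<Longrightarrow>
   w = [A] \<or> w = [B] \<or> w = [A,B] \<or> w = [B,A] \<or> 3 \<le> length w"
proof (cases w rule: remdups_adj.cases)
  case (2 x) then show ?thesis by (cases x) auto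
next
  case (3 x y xs)
  assume c: "carlitz w"
  show ?thesis
  proof (cases xs)
    case Nil then show ?thesis using 3 c by (cases x; cases y) auto
  next
    case (Cons a b) then show ?thesis using 3 by simp
  qed
qed simp

lemma ncount_rec: "ncount i j (Suc k) = (if 0<i then ncount (i-1) j k else 0) + (if 0<j then ncount i (j-1) k else 0)
   + (if 0<i \<and> 0<j then 2 * ncount (i-1) (j-1) k + ncount (i-1) (j-1) (Suc k) else 0)"
proof -
  let ?X = "CF i j (Suc k)"
  let ?S = "\<lambda>w. {fs \<in> ?X. last fs = w}"
  let ?L = "{fs \<in> ?X. 3 \<le> length (last fs)}"
  have X: "?X = ?S [A] \<union> (?S [B] \<union> (?S [A,B] \<union> (?S [B,A] \<union> ?L)))"
  proof
    show "?X \<subseteq> ?S [A] \<union> (?S [B] \<union> (?S [A,B] \<union> (?S [B,A] \<union> ?L)))"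
    proof
      fix fs assume fs: "fs \<in> ?X"
      then have "fs \<noteq> []" by (rule CF_last)
      then have "last fs \<in> set fs" by simp
      then have "last fs \<noteq> []" "carlitz (last fs)" using fs by (auto simp: CF_mem)
      from short_cases[OF this] fs show "fs \<in> ?S [A] \<union> (?S [B] \<union> (?S [A,B] \<union> (?S [B,A] \<union> ?L)))"
        by blast
    qed
  qed auto
  have f: "finite (?S w)" "finite ?L" for w using finite_CF[of i j "Suc k"] by auto
  have "ncount i j (Suc k) = card ?X" by (simp add: ncount_def)
  also have "\<dots> = card (?S [A]) + (card (?S [B]) + (card (?S [A,B]) + (card (?S [B,A]) + card ?L)))"
  proof -
    have d1: "card (?S [B,A] \<union> ?L) = card (?S [B,A]) + card ?L"
      by (rule card_Un_disjoint) (use f in auto)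
    have d2: "card (?S [A,B] \<union> (?S [B,A] \<union> ?L)) = card (?S [A,B]) + card (?S [B,A] \<union> ?L)"
      by (rule card_Un_disjoint) (use f in auto)
    have d3: "card (?S [B] \<union> (?S [A,B] \<union> (?S [B,A] \<union> ?L))) = card (?S [B]) + card (?S [A,B] \<union> (?S [B,A] \<union> ?L))"
      by (rule card_Un_disjoint) (use f in auto)
    have d4: "card (?S [A] \<union> (?S [B] \<union> (?S [A,B] \<union> (?S [B,A] \<union> ?L)))) = card (?S [A]) + card (?S [B] \<union> (?S [A,B] \<union> (?S [B,A] \<union> ?L)))"
      by (rule card_Un_disjoint) (use f in auto)
    have "card ?X = card (?S [A] \<union> (?S [B] \<union> (?S [A,B] \<union> (?S [B,A] \<union> ?L))))"
      by (rule arg_cong[OF X])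
    then show ?thesis using d4 d3 d2 d1 by simp
  qed
  also have "\<dots> = (if 0<i then ncount (i-1) j k else 0) + ((if 0<j then ncount i (j-1) k else 0)
      + ((if 0<i \<and> 0<j then ncount (i-1) (j-1) k else 0) + ((if 0<i \<and> 0<j then ncount (i-1) (j-1) k else 0)
      + (if 0 < i \<and> 0 < j then ncount (i - 1) (j - 1) (Suc k) else 0))))"
    by (simp add: card_last card_long Suc_le_eq)
  finally show ?thesis by simp
qed



definition lp :: "int \<Rightarrow> real poly" where "lp a = (if a < 0 then 0 else lpoly (nat a))"
definition nc :: "int \<Rightarrow> int \<Rightarrow> nat \<Rightarrow> real" where
  "nc a b k = (if a < 0 \<or> b < 0 then 0 else real (ncount (nat a) (nat b) k))"
definition QQ :: "nat \<Rightarrow> int \<Rightarrow> int \<Rightarrow> real poly" where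
  "QQ K a b = (\<Sum>k\<le>K. smult (nc a b k) (lpoly k))"

lemma nat_1_plus[simp]: "nat (1 + int n) = Suc n"
  by simp

lemma nc_rec: "nc a b (Suc k) = nc (a-1) b k + nc a (b-1) k + 2 * nc (a-1) (b-1) k + nc (a-1) (b-1) (Suc k)"
proof (cases "a < 0 \<or> b < 0")
  case True then show ?thesis by (auto simp: nc_def)
next
  case False
  define i where "i = nat a"
  define j where "j = nat b"
  have ij: "a = int i" "b = int j" using False by (auto simp: i_def j_def)
  show ?thesis using ncount_rec[of i j k] unfolding ij
    by (cases i; cases j) (simp_all add: nc_def)
qed

lemma nc_supp: "a + b < int k \<Longrightarrow> nc a b k = 0"
proof (cases "a < 0 \<or> b < 0")
  case False
  assume k: "a + b < int k"
  have "ncount (nat a) (nat b) k = 0"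
  proof (rule ccontr)
    assume "ncount (nat a) (nat b) k \<noteq> 0"
    then have "k \<le> nat a + nat b" by (rule ncount_support)
    then show False using k False by linarith
  qed
  then show ?thesis by (simp add: nc_def)
qed (auto simp: nc_def)

lemma nc_0: "nc a b 0 = (if a = 0 \<and> b = 0 then 1 else 0)"
  by (auto simp: nc_def ncount_0)

lemma nc_neg: "a < 0 \<or> b < 0 \<Longrightarrow> nc a b k = 0"
  by (auto simp: nc_def)

lemma lpoly_at0: "poly (lpoly k) 0 = (if k = 0 then 1 else 0)"
proof (cases k)
  case (Suc n)
  have "(real (Suc n) - 1) gchoose (Suc n) = real (n choose Suc n)"
    by (simp add: binomial_gbinomial)
  also have "\<dots> = 0" by simp
  finally have "(real (Suc n) - 1) gchoose (Suc n) = 0" .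
  then show ?thesis using Suc by (simp add: poly_0_coeff_0 coeff_lpoly)
qed simp

lemma lp_at0: "poly (lp a) 0 = (if a = 0 then 1 else 0)"
  by (auto simp: lp_def lpoly_at0)

lemma lp_deriv: "pderiv (lp a + lp (a-1)) = lp (a-1)"
proof -
  consider "a < 0" | "a = 0" | n where "a = int (Suc n)"
  proof (cases "a < 0")
    case False
    then have "a = int (nat a)" by simp
    then show ?thesis using that by (cases "nat a") auto
  qed
  then show ?thesis
  proof cases
    case 1 then show ?thesis by (simp add: lp_def)
  next
    case 2 then show ?thesis by (simp add: lp_def)
  next
    case 3 then show ?thesis using lpoly_deriv[of n] by (simp add: lp_def pderiv_add)
  qed
qed

lemma tele:
  assumes "\<And>k. a (Suc k) = b k + b (Suc k)"
  shows "(\<Sum>k\<le>K. smult (a k) (pderiv (lpoly k))) = (\<Sum>k\<le>K. smult (b k) (lpoly k)) - smult (b K) (pderiv (lpoly (Suc K)))"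
proof (induction K)
  case 0
  have "pderiv (lpoly (Suc 0)) = 1" using lpoly_deriv[of 0] by simp
  then show ?case by simp
next
  case (Suc K)
  have d: "pderiv (lpoly (Suc (Suc K))) = lpoly (Suc K) - pderiv (lpoly (Suc K))"
    using lpoly_deriv[of "Suc K"] by (simp add: algebra_simps)
  have e: "smult (b (Suc K)) (lpoly (Suc K)) - smult (b (Suc K)) (pderiv (lpoly (Suc (Suc K))))
      = smult (b (Suc K)) (pderiv (lpoly (Suc K)))"
    unfolding d by (simp add: smult_diff_right)
  have "(\<Sum>k\<le>Suc K. smult (a k) (pderiv (lpoly k))) =
     (\<Sum>k\<le>K. smult (a k) (pderiv (lpoly k))) + smult (a (Suc K)) (pderiv (lpoly (Suc K)))" by simp
  also have "\<dots> = (\<Sum>k\<le>K. smult (b k) (lpoly k)) + smult (b (Suc K)) (pderiv (lpoly (Suc K)))"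
    unfolding Suc.IH assms[of K] smult_add_left by simp
  also have "\<dots> = (\<Sum>k\<le>Suc K. smult (b k) (lpoly k)) - smult (b (Suc K)) (pderiv (lpoly (Suc (Suc K))))"
    using e by (simp add: algebra_simps)
  finally show ?case .
qed

lemma pderiv_eq: "pderiv (p::real poly) = pderiv q \<Longrightarrow> poly p 0 = poly q 0 \<Longrightarrow> p = q"
proof -
  assume d: "pderiv p = pderiv q" and z: "poly p 0 = poly q 0"
  have "pderiv (p - q) = 0" using d by (simp add: pderiv_diff)
  then obtain h where h: "p - q = [:h:]" using pderiv_iszero by blast
  have "poly (p - q) 0 = 0" using z by simp
  then have "h = 0" using h by simp
  then show "p = q" using h by simp
qed

lemma QQ_neg: "a < 0 \<or> b < 0 \<Longrightarrow> QQ K a b = 0"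
  by (simp add: QQ_def nc_neg)

lemma lp_neg: "a < 0 \<Longrightarrow> lp a = 0"
  by (simp add: lp_def)

lemma main: "\<forall>a b K. a + b < int n \<longrightarrow> a + b \<le> int K \<longrightarrow> lp a * lp b = QQ K a b"
proof (induction n)
  case 0
  show ?case
  proof (intro allI impI)
    fix a b K assume "a + b < int 0"
    then have ab: "a < 0 \<or> b < 0" by linarith
    then show "lp a * lp b = QQ K a b" using QQ_neg[OF ab] lp_neg by auto
  qed
next
  case (Suc n)
  show ?case
  proof (intro allI impI)
    fix a b K assume n: "a + b < int (Suc n)" and K: "a + b \<le> int K"
    show "lp a * lp b = QQ K a b"
    proof (cases "a < 0 \<or> b < 0")
      case True
      then show ?thesis using QQ_neg[OF True] lp_neg by auto
    next
      case False
      have e1: "lp (a-1) * lp b = QQ K (a-1) b" using Suc.IH n K by auto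
      have e2: "lp a * lp (b-1) = QQ K a (b-1)" using Suc.IH n K by auto
      have e3: "lp (a-1) * lp (b-1) = QQ K (a-1) (b-1)" using Suc.IH n K by auto
      define M where "M k = nc (a-1) b k + nc a (b-1) k + nc (a-1) (b-1) k + nc (a-1) (b-1) k" for k
      define As where "As k = nc a b k + nc (a-1) b k + nc a (b-1) k + nc (a-1) (b-1) k" for k
      define S where "S = (lp a + lp (a-1)) * (lp b + lp (b-1))"
      define T where "T = (\<Sum>k\<le>K. smult (As k) (lpoly k))"
      have sumM: "(\<Sum>k\<le>K. smult (M k) (lpoly k)) = QQ K (a-1) b + QQ K a (b-1) + QQ K (a-1) (b-1) + QQ K (a-1) (b-1)"
        by (simp only: M_def QQ_def smult_add_left sum.distrib)
      have T_eq: "T = QQ K a b + QQ K (a-1) b + QQ K a (b-1) + QQ K (a-1) (b-1)"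
        by (simp add: T_def As_def QQ_def smult_add_left sum.distrib)
      have S_eq: "S = lp a * lp b + lp (a-1) * lp b + lp a * lp (b-1) + lp (a-1) * lp (b-1)"
        by (simp add: S_def algebra_simps)
      have dS: "pderiv S = (\<Sum>k\<le>K. smult (M k) (lpoly k))"
      proof -
        have "pderiv S = (lp a + lp (a-1)) * lp (b-1) + (lp b + lp (b-1)) * lp (a-1)"
          unfolding S_def pderiv_mult lp_deriv ..
        also have "\<dots> = lp (a-1) * lp b + lp a * lp (b-1) + lp (a-1) * lp (b-1) + lp (a-1) * lp (b-1)"
          by (simp add: algebra_simps)
        finally show ?thesis unfolding sumM e1 e2 e3 .
      qed
      have MK: "M K = 0" unfolding M_def using K by (simp add: nc_supp)
      have rec: "As (Suc k) = M k + M (Suc k)" for k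
        unfolding As_def M_def using nc_rec[of a b k] nc_rec[of "a-1" b k] nc_rec[of a "b-1" k] nc_rec[of "a-1" "b-1" k]
        by (simp add: algebra_simps)
      have dT: "pderiv T = (\<Sum>k\<le>K. smult (M k) (lpoly k))"
        unfolding T_def pderiv_sum' pderiv_smult tele[of As M, OF rec] MK by simp
      have z: "poly S 0 = poly T 0"
      proof -
        have "poly T 0 = (\<Sum>k\<le>K. As k * (if k = 0 then 1 else 0))"
          by (simp add: T_def poly_sum lpoly_at0)
        also have "\<dots> = (\<Sum>k\<le>K. if k = 0 then As k else 0)" by (rule sum.cong) auto
        also have "\<dots> = As 0" by (subst sum.delta) auto
        finally show ?thesis using False
          by (simp add: S_def As_def lp_at0 nc_0)
      qed
      have "S = T" using pderiv_eq[OF _ z] dS dT by simp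
      then show ?thesis using S_eq T_eq e1 e2 e3 by simp
    qed
  qed
qed


theorem lemma2p3:
  fixes i j :: nat
  shows "lpoly i * lpoly j = (\<Sum>k\<in>{k. ncount i j k \<noteq> 0}. smult (real (ncount i j k)) (lpoly k))"
proof -
  have "lp (int i) * lp (int j) = QQ (i+j) (int i) (int j)" using main[of "Suc (i+j)"] by auto
  then have 1: "lpoly i * lpoly j = (\<Sum>k\<le>i+j. smult (real (ncount i j k)) (lpoly k))"
    by (simp add: lp_def QQ_def nc_def)
  have 2: "(\<Sum>k\<in>{k. ncount i j k \<noteq> 0}. smult (real (ncount i j k)) (lpoly k))
      = (\<Sum>k\<le>i+j. smult (real (ncount i j k)) (lpoly k))"
    by (rule sum.mono_neutral_left) (auto intro: ncount_support)
  show ?thesis using 1 2 by simp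
qed

end
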